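(* Let $f$ be a successor function for a geometry $(G,I,O)$ and let $\mathcal P_f$ be its induced path cover. Then $f$ is a flow function (i.e. there is a partial order $\le$ on $V(G)$ with $(f,\le)$ a flow) if and only if $\mathcal P_f$ is a causal path cover.
   Context: Graphs are finite, simple, undirected, without self-loops; $v\sim w$ denotes adjacency. A geometry is $(G,I,O)$ with $I,O\subseteq V(G)$; $O^c=V(G)\setminus O$, $I^c=V(G)\setminus I$. A flow for $(G,I,O)$ is a pair $(f,\le)$, $f:O^c\to I^c$, $\le$ a partial order on $V(G)$, with, for all $v\in O^c$, $w\in V(G)$: $v\sim f(v)$; $v\le f(v)$; $w\sim f(v)\Rightarrow v\le w$. A path cover of $(G,I,O)$ is a collection of directed paths in $G$ (possibly trivial) such that every vertex lies on exactly one path, each path meets $I$ at most at its initial vertex, and each path meets $O$ exactly at its final vertex. A successor function is an injective $f:O^c\to I^c$ with $v\sim f(v)$ such that the arcs $v\to f(v)$ ($v\in O^c$) form a path cover, denoted $\mathcal P_f$. For a family $\mathcal P$ of vertex-disjoint directed paths, an edge is covered by $\mathcal P$ if it underlies an arc of a path of $\mathcal P$. An influencing walk for $\mathcal P$ is a walk that is a concatenation of zero or more segments of the types (i) $v\to w$, an arc of a path of $\mathcal P$; (ii) $v\to z\to w$ with $v\to z$ an arc of a path of $\mathcal P$ and $zw\in E(G)$ not covered by $\mathcal P$. A vicious circuit for $\mathcal P$ is a closed influencing walk (starting and ending at the same vertex) with at least one segment. A causal path cover is a path cover with no vicious circuits. *)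

theory Defs
  imports Main
begin

definition simple_graph :: "'a set \<Rightarrow> ('a \<Rightarrow> 'a \<Rightarrow> bool) \<Rightarrow> bool" where
  "simple_graph V E \<longleftrightarrow> finite V \<and> (\<forall>v w. E v w \<longrightarrow> v \<in> V \<and> w \<in> V)
     \<and> (\<forall>v w. E v w \<longrightarrow> E w v) \<and> (\<forall>v. \<not> E v v)"

definition geometry :: "'a set \<Rightarrow> ('a \<Rightarrow> 'a \<Rightarrow> bool) \<Rightarrow> 'a set \<Rightarrow> 'a set \<Rightarrow> bool" where
  "geometry V E Ins Outs \<longleftrightarrow> simple_graph V E \<and> Ins \<subseteq> V \<and> Outs \<subseteq> V"

definition is_flow :: "'a set \<Rightarrow> ('a \<Rightarrow> 'a \<Rightarrow> bool) \<Rightarrow> 'a set \<Rightarrow> 'a set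
    \<Rightarrow> ('a \<Rightarrow> 'a) \<Rightarrow> ('a \<times> 'a) set \<Rightarrow> bool" where
  "is_flow V E Ins Outs f R \<longleftrightarrow>
     (\<forall>v \<in> V - Outs. f v \<in> V - Ins) \<and> partial_order_on V R \<and>
     (\<forall>v \<in> V - Outs. E v (f v) \<and> (v, f v) \<in> R \<and> (\<forall>w \<in> V. E w (f v) \<longrightarrow> (v, w) \<in> R))"

definition is_flow_function :: "'a set \<Rightarrow> ('a \<Rightarrow> 'a \<Rightarrow> bool) \<Rightarrow> 'a set \<Rightarrow> 'a set
    \<Rightarrow> ('a \<Rightarrow> 'a) \<Rightarrow> bool" where
  "is_flow_function V E Ins Outs f \<longleftrightarrow> (\<exists>R. is_flow V E Ins Outs f R)"

definition dpath :: "'a set \<Rightarrow> ('a \<Rightarrow> 'a \<Rightarrow> bool) \<Rightarrow> 'a list \<Rightarrow> bool" where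
  "dpath V E p \<longleftrightarrow> p \<noteq> [] \<and> distinct p \<and> set p \<subseteq> V \<and>
     (\<forall>i. Suc i < length p \<longrightarrow> E (p ! i) (p ! Suc i))"

definition path_arcs :: "'a list \<Rightarrow> ('a \<times> 'a) set" where
  "path_arcs p = set (zip p (tl p))"

definition family_arcs :: "'a list set \<Rightarrow> ('a \<times> 'a) set" where
  "family_arcs P = (\<Union>p \<in> P. path_arcs p)"

definition path_cover :: "'a set \<Rightarrow> ('a \<Rightarrow> 'a \<Rightarrow> bool) \<Rightarrow> 'a set \<Rightarrow> 'a set
    \<Rightarrow> 'a list set \<Rightarrow> bool" where
  "path_cover V E Ins Outs P \<longleftrightarrow>
     (\<forall>p \<in> P. dpath V E p) \<and>
     (\<forall>v \<in> V. \<exists>!p. p \<in> P \<and> v \<in> set p) \<and>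
     (\<forall>p \<in> P. \<forall>i < length p. p ! i \<in> Ins \<longrightarrow> i = 0) \<and>
     (\<forall>p \<in> P. last p \<in> Outs \<and> (\<forall>i < length p. p ! i \<in> Outs \<longrightarrow> i = length p - 1))"

definition successor_function :: "'a set \<Rightarrow> ('a \<Rightarrow> 'a \<Rightarrow> bool) \<Rightarrow> 'a set \<Rightarrow> 'a set
    \<Rightarrow> ('a \<Rightarrow> 'a) \<Rightarrow> bool" where
  "successor_function V E Ins Outs f \<longleftrightarrow>
     inj_on f (V - Outs) \<and> (\<forall>v \<in> V - Outs. f v \<in> V - Ins \<and> E v (f v)) \<and>
     (\<exists>P. path_cover V E Ins Outs P \<and> family_arcs P = {(v, f v) | v. v \<in> V - Outs})"

text \<open>The path cover induced by f (unique when f is a successor function).\<close>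
definition induced_cover :: "'a set \<Rightarrow> ('a \<Rightarrow> 'a \<Rightarrow> bool) \<Rightarrow> 'a set \<Rightarrow> 'a set
    \<Rightarrow> ('a \<Rightarrow> 'a) \<Rightarrow> 'a list set" where
  "induced_cover V E Ins Outs f =
     (SOME P. path_cover V E Ins Outs P \<and> family_arcs P = {(v, f v) | v. v \<in> V - Outs})"

definition covered :: "'a list set \<Rightarrow> 'a \<Rightarrow> 'a \<Rightarrow> bool" where
  "covered P z w \<longleftrightarrow> (z, w) \<in> family_arcs P \<or> (w, z) \<in> family_arcs P"

text \<open>Influencing walks, as vertex sequences built from segments.\<close>
inductive infl_walk :: "('a \<Rightarrow> 'a \<Rightarrow> bool) \<Rightarrow> 'a list set \<Rightarrow> 'a list \<Rightarrow> bool"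
  for E P where
  nil: "infl_walk E P [v]"
| seg1: "(v, w) \<in> family_arcs P \<Longrightarrow> infl_walk E P (w # ws) \<Longrightarrow> infl_walk E P (v # w # ws)"
| seg2: "(v, z) \<in> family_arcs P \<Longrightarrow> E z w \<Longrightarrow> \<not> covered P z w \<Longrightarrow>
         infl_walk E P (w # ws) \<Longrightarrow> infl_walk E P (v # z # w # ws)"

text \<open>Closed influencing walk with at least one segment (i.e. at least two vertex entries).\<close>
definition vicious_circuit :: "('a \<Rightarrow> 'a \<Rightarrow> bool) \<Rightarrow> 'a list set \<Rightarrow> 'a list \<Rightarrow> bool" where
  "vicious_circuit E P ws \<longleftrightarrow> infl_walk E P ws \<and> 2 \<le> length ws \<and> hd ws = last ws"

definition causal_path_cover :: "'a set \<Rightarrow> ('a \<Rightarrow> 'a \<Rightarrow> bool) \<Rightarrow> 'a set \<Rightarrow> 'a set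
    \<Rightarrow> 'a list set \<Rightarrow> bool" where
  "causal_path_cover V E Ins Outs P \<longleftrightarrow> path_cover V E Ins Outs P \<and> (\<nexists>ws. vicious_circuit E P ws)"

end

theory Submission
  imports Defs
begin

lemma walk_in_R:
  assumes w: "infl_walk E P ws"
    and FA: "family_arcs P = {(v, f v) | v. v \<in> V - Outs}"
    and sym: "\<forall>v w. E v w \<longrightarrow> E w v"
    and irr: "\<forall>v. \<not> E v v"
    and EV: "\<forall>v w. E v w \<longrightarrow> v \<in> V \<and> w \<in> V"
    and fl: "is_flow V E Ins Outs f R"
  shows "(hd ws, last ws) \<in> R\<^sup>= \<and> (2 \<le> length ws \<longrightarrow> (hd ws, last ws) \<in> R \<and> hd ws \<noteq> last ws)"
  using w
proof (induction rule: infl_walk.induct)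
  case (nil v)
  then show ?case by simp
next
  case (seg1 v w ws)
  from fl have po: "trans R" "antisym R" unfolding is_flow_def by (auto dest: partial_order_onD)
  from seg1.hyps(1) FA obtain u where u: "v = u" "w = f u" "u \<in> V - Outs" by auto
  with fl have vw: "(v, w) \<in> R" "E v w" unfolding is_flow_def by auto
  have vw': "v \<noteq> w" using vw(2) irr by auto
  have wl: "(w, last (w # ws)) \<in> R\<^sup>=" using seg1.IH by simp
  have "(v, last (w # ws)) \<in> R" using wl vw(1) po(1) by (auto dest: transD)
  moreover have "v \<noteq> last (w # ws)"
  proof
    assume "v = last (w # ws)"
    with wl vw(1) vw' po(2) show False by (auto dest: antisymD)
  qed
  ultimately show ?case by simp
next
  case (seg2 v z w ws)
  from fl have po: "trans R" "antisym R" unfolding is_flow_def by (auto dest: partial_order_onD)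
  from seg2.hyps(1) FA obtain u where u: "v = u" "z = f u" "u \<in> V - Outs" by auto
  have "E w z" using seg2.hyps(2) sym by blast
  moreover have "w \<in> V" using seg2.hyps(2) EV by blast
  ultimately have vw: "(v, w) \<in> R" using fl u unfolding is_flow_def by auto
  have vw': "v \<noteq> w"
  proof
    assume "v = w"
    then have "(w, z) \<in> family_arcs P" using seg2.hyps(1) by simp
    then have "covered P z w" unfolding covered_def by simp
    with seg2.hyps(3) show False by simp
  qed
  have wl: "(w, last (w # ws)) \<in> R\<^sup>=" using seg2.IH by simp
  have "(v, last (w # ws)) \<in> R" using wl vw(1) po(1) by (auto dest: transD)
  moreover have "v \<noteq> last (w # ws)"
  proof
    assume "v = last (w # ws)"
    with wl vw(1) vw' po(2) show False by (auto dest: antisymD)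
  qed
  ultimately show ?case by simp
qed

lemma trancl_walk:
  assumes "(a, b) \<in> S\<^sup>+"
    and S: "S = {(v, w). v \<in> V - Outs \<and> (w = f v \<or> (E (f v) w \<and> \<not> covered P (f v) w))}"
    and FA: "family_arcs P = {(v, f v) | v. v \<in> V - Outs}"
  shows "\<exists>ws. infl_walk E P ws \<and> 2 \<le> length ws \<and> hd ws = a \<and> last ws = b"
  using assms(1)
proof (induction rule: converse_trancl_induct)
  case (base y)
  then have y: "y \<in> V - Outs" and c: "b = f y \<or> (E (f y) b \<and> \<not> covered P (f y) b)"
    using S by auto
  have arc: "(y, f y) \<in> family_arcs P" using FA y by auto
  show ?case
  proof (cases "b = f y")
    case True
    then have "infl_walk E P [y, b]" using arc by (auto intro: infl_walk.intros)
    then show ?thesis by (intro exI[of _ "[y, b]"]) simp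
  next
    case False
    with c have "E (f y) b" "\<not> covered P (f y) b" by auto
    then have "infl_walk E P [y, f y, b]" using arc by (auto intro: infl_walk.intros)
    then show ?thesis by (intro exI[of _ "[y, f y, b]"]) simp
  qed
next
  case (step y z)
  then obtain ws where ws: "infl_walk E P ws" "2 \<le> length ws" "hd ws = z" "last ws = b" by blast
  then obtain ws' where ws': "ws = z # ws'" by (cases ws) auto
  from step.hyps(1) have y: "y \<in> V - Outs" and c: "z = f y \<or> (E (f y) z \<and> \<not> covered P (f y) z)"
    using S by auto
  have arc: "(y, f y) \<in> family_arcs P" using FA y by auto
  show ?case
  proof (cases "z = f y")
    case True
    then have "infl_walk E P (y # z # ws')" using arc ws ws' by (auto intro: infl_walk.intros)
    then show ?thesis using ws ws' by (intro exI[of _ "y # z # ws'"]) simp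
  next
    case False
    with c have "E (f y) z" "\<not> covered P (f y) z" by auto
    then have "infl_walk E P (y # f y # z # ws')" using arc ws ws' by (auto intro: infl_walk.intros)
    then show ?thesis using ws ws' by (intro exI[of _ "y # f y # z # ws'"]) simp
  qed
qed

theorem mainTheorem5:
  fixes V :: "'a set" and E :: "'a \<Rightarrow> 'a \<Rightarrow> bool" and Ins Outs :: "'a set" and f :: "'a \<Rightarrow> 'a"
  assumes "geometry V E Ins Outs"
    and "successor_function V E Ins Outs f"
  shows "is_flow_function V E Ins Outs f \<longleftrightarrow> causal_path_cover V E Ins Outs (induced_cover V E Ins Outs f)"
proof -
  define P where "P = induced_cover V E Ins Outs f"
  have sg: "simple_graph V E" using assms(1) unfolding geometry_def by simp
  have sym: "\<forall>v w. E v w \<longrightarrow> E w v" and irr: "\<forall>v. \<not> E v v"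
    and EV: "\<forall>v w. E v w \<longrightarrow> v \<in> V \<and> w \<in> V" using sg unfolding simple_graph_def by auto
  have sf: "inj_on f (V - Outs)" "\<forall>v \<in> V - Outs. f v \<in> V - Ins \<and> E v (f v)"
    using assms(2) unfolding successor_function_def by auto
  have "\<exists>P. path_cover V E Ins Outs P \<and> family_arcs P = {(v, f v) | v. v \<in> V - Outs}"
    using assms(2) unfolding successor_function_def by auto
  then have PP: "path_cover V E Ins Outs P \<and> family_arcs P = {(v, f v) | v. v \<in> V - Outs}"
    unfolding P_def induced_cover_def by (rule someI_ex)
  then have pc: "path_cover V E Ins Outs P" and FA: "family_arcs P = {(v, f v) | v. v \<in> V - Outs}"
    by auto
  show ?thesis unfolding P_def[symmetric]
  proof
    assume "is_flow_function V E Ins Outs f"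
    then obtain R where fl: "is_flow V E Ins Outs f R" unfolding is_flow_function_def by auto
    have "\<nexists>ws. vicious_circuit E P ws"
    proof
      assume "\<exists>ws. vicious_circuit E P ws"
      then obtain ws where "infl_walk E P ws" "2 \<le> length ws" "hd ws = last ws"
        unfolding vicious_circuit_def by auto
      with walk_in_R[OF _ FA sym irr EV fl] show False by blast
    qed
    with pc show "causal_path_cover V E Ins Outs P" unfolding causal_path_cover_def by simp
  next
    assume "causal_path_cover V E Ins Outs P"
    then have nv: "\<nexists>ws. vicious_circuit E P ws" unfolding causal_path_cover_def by simp
    define S where "S = {(v, w). v \<in> V - Outs \<and> (w = f v \<or> (E (f v) w \<and> \<not> covered P (f v) w))}"
    define R where "R = Id_on V \<union> S\<^sup>+"
    have SV: "S \<subseteq> V \<times> V" using sf(2) EV unfolding S_def by auto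
    have noloop: "(a, a) \<notin> S\<^sup>+" for a
    proof
      assume "(a, a) \<in> S\<^sup>+"
      from trancl_walk[OF this S_def FA] nv show False unfolding vicious_circuit_def by auto
    qed
    have RV: "R \<subseteq> V \<times> V" unfolding R_def using SV trancl_subset_Sigma[OF SV] by auto
    have trR: "trans R" unfolding R_def trans_def by (auto intro: trancl_trans)
    have asR: "antisym R" unfolding R_def antisym_def
      using noloop by (auto intro: trancl_trans)
    have po: "partial_order_on V R" unfolding partial_order_on_def preorder_on_def refl_on_def
      using RV trR asR unfolding R_def by auto
    have "is_flow V E Ins Outs f R"
      unfolding is_flow_def
    proof (intro conjI)
      show "partial_order_on V R" by (rule po)
      show "\<forall>v\<in>V - Outs. f v \<in> V - Ins" using sf(2) by auto
      show "\<forall>v\<in>V - Outs. E v (f v) \<and> (v, f v) \<in> R \<and> (\<forall>w\<in>V. E w (f v) \<longrightarrow> (v, w) \<in> R)"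
    proof (rule ballI, intro conjI)
      fix v assume v: "v \<in> V - Outs"
      show "E v (f v)" using sf(2) v by auto
      show "(v, f v) \<in> R" using v unfolding R_def S_def by auto
      show "\<forall>w\<in>V. E w (f v) \<longrightarrow> (v, w) \<in> R"
      proof (intro ballI impI)
        fix w assume w: "w \<in> V" "E w (f v)"
        then have e: "E (f v) w" using sym by blast
        show "(v, w) \<in> R"
        proof (cases "covered P (f v) w")
          case False
          then have "(v, w) \<in> S" using v e unfolding S_def by auto
          then show ?thesis unfolding R_def by auto
        next
          case True
          then have "(f v, w) \<in> family_arcs P \<or> (w, f v) \<in> family_arcs P" unfolding covered_def .
          then show ?thesis
          proof
            assume "(f v, w) \<in> family_arcs P"
            then have fv: "f v \<in> V - Outs" "w = f (f v)" using FA by auto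
            have "(v, f v) \<in> S" "(f v, w) \<in> S" using v fv unfolding S_def by auto
            then have "(v, w) \<in> S\<^sup>+" by (meson trancl.simps)
            then show ?thesis unfolding R_def by auto
          next
            assume "(w, f v) \<in> family_arcs P"
            then have "w \<in> V - Outs" "f w = f v" using FA by auto
            then have "w = v" using sf(1) v by (meson inj_onD)
            then show ?thesis using w unfolding R_def by auto
          qed
        qed
      qed
    qed
    qed
    then show "is_flow_function V E Ins Outs f" unfolding is_flow_function_def by auto
  qed
qed

end
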